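(* Let $\mathbb{B}$ be a bouquet that has a certificate of pseudo-orientability. Then every bouquet that is a partial dual of $\mathbb{B}$ also has a certificate of pseudo-orientability.
   Context: A ribbon graph is a surface with boundary written as a union of vertex discs and edge discs meeting in disjoint line segments, each on the boundary of exactly one vertex and one edge, each edge containing exactly two such segments (its ends). A bouquet is a ribbon graph with one vertex $v$; its edges are loops; a loop $e$ is orientable if $v\cup e$ is an annulus, non-orientable if it is a Möbius band. A certificate of pseudo-orientability of a bouquet is a pair $(S_1,S_2)$ of closed arcs covering the boundary circle of $v$ and meeting in exactly two points, such that both ends of each orientable loop lie in the interior of one $S_i$ and each non-orientable loop has one end in the interior of $S_1$ and the other in the interior of $S_2$. For $X\subseteq E(\mathbb{B})$, the partial dual $\mathbb{B}^X$ has the same edges and, as vertices, discs glued along each boundary component of the spanning ribbon subgraph $(V(\mathbb{B}),X)$, the old vertex discarded. *)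

theory Defs
  imports Main
begin

text \<open>Combinatorial (graph-encoded map / flag) model of ribbon graphs.
  Each edge disc e is a rectangle with four corners (flags) (e, i, s):
  i :: bool names the end of e, s :: bool names the side of e.
  The corner involutions are fixed:
    edge_alpha flips the side (crossing the attaching segment at an end),
    edge_beta  flips the end  (running along a long side of the edge disc).
  A ribbon graph on the edge set E is given by the involution nu on the flags
  which pairs the two corners joined by an arc of a vertex boundary that
  lies between consecutive attaching segments.
  Vertices = orbits of the flags under nu and edge_alpha.\<close>

type_synonym 'e flag = "'e \<times> bool \<times> bool"

definition flags :: "'e set \<Rightarrow> 'e flag set" where
  "flags E = E \<times> UNIV \<times> UNIV"

definition edge_alpha :: "'e flag \<Rightarrow> 'e flag" where
  "edge_alpha f = (case f of (e, i, s) \<Rightarrow> (e, i, \<not> s))"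

definition edge_beta :: "'e flag \<Rightarrow> 'e flag" where
  "edge_beta f = (case f of (e, i, s) \<Rightarrow> (e, \<not> i, s))"

definition ribbon_graph :: "'e set \<Rightarrow> ('e flag \<Rightarrow> 'e flag) \<Rightarrow> bool" where
  "ribbon_graph E nu \<longleftrightarrow> finite E \<and>
     (\<forall>f \<in> flags E. nu f \<in> flags E \<and> nu (nu f) = f \<and> nu f \<noteq> f)"

definition vertex_step :: "'e set \<Rightarrow> ('e flag \<Rightarrow> 'e flag) \<Rightarrow> ('e flag \<times> 'e flag) set" where
  "vertex_step E nu = {(f, nu f) | f. f \<in> flags E} \<union> {(f, edge_alpha f) | f. f \<in> flags E}"

text \<open>A bouquet: a ribbon graph with exactly one vertex (all flags on one vertex
  boundary). The edgeless case (empty flag set) represents the single vertex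
  with no edges.\<close>
definition bouquet :: "'e set \<Rightarrow> ('e flag \<Rightarrow> 'e flag) \<Rightarrow> bool" where
  "bouquet E nu \<longleftrightarrow> ribbon_graph E nu \<and>
     (\<forall>f \<in> flags E. \<forall>g \<in> flags E. (f, g) \<in> (vertex_step E nu)\<^sup>*)"

text \<open>A loop e is orientable iff v \<union> e is orientable (an annulus), i.e. some
  orientation of the vertex boundary (a 2-colouring of the flags flipped by
  nu and edge_alpha) is compatible with the edge e (also flipped by edge_beta
  on the corners of e).\<close>
definition orientable_loop :: "'e set \<Rightarrow> ('e flag \<Rightarrow> 'e flag) \<Rightarrow> 'e \<Rightarrow> bool" where
  "orientable_loop E nu e \<longleftrightarrow>
     (\<exists>c :: 'e flag \<Rightarrow> bool.
        (\<forall>f \<in> flags E. c (nu f) \<noteq> c f \<and> c (edge_alpha f) \<noteq> c f) \<and>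
        (\<forall>i s. c (edge_beta (e, i, s)) \<noteq> c (e, i, s)))"

text \<open>The two cut points of the boundary
  circle lie in (at most two) vertex arcs {f, nu f}; h f says whether the end
  containing corner f lies in S_1 (True) or S_2 (False). The ends in S_1 form
  one cyclic block, i.e. h changes value across at most two vertex arcs.\<close>
definition certificate :: "'e set \<Rightarrow> ('e flag \<Rightarrow> 'e flag) \<Rightarrow> ('e flag \<Rightarrow> bool) \<Rightarrow> bool" where
  "certificate E nu h \<longleftrightarrow>
     (\<forall>f \<in> flags E. h (edge_alpha f) = h f) \<and>
     card {{f, nu f} | f. f \<in> flags E \<and> h f \<noteq> h (nu f)} \<le> 2 \<and>
     (\<forall>e \<in> E. orientable_loop E nu e \<longrightarrow> h (e, False, False) = h (e, True, False)) \<and>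
     (\<forall>e \<in> E. \<not> orientable_loop E nu e \<longrightarrow> h (e, False, False) \<noteq> h (e, True, False))"

definition pseudo_orientable :: "'e set \<Rightarrow> ('e flag \<Rightarrow> 'e flag) \<Rightarrow> bool" where
  "pseudo_orientable E nu \<longleftrightarrow> (\<exists>h. certificate E nu h)"

text \<open>Partial duality w.r.t. X: on edges of X the roles of end and side are
  exchanged (the new vertex boundaries are the boundary components of (V,X)).\<close>
definition swap_on :: "'e set \<Rightarrow> 'e flag \<Rightarrow> 'e flag" where
  "swap_on X f = (case f of (e, i, s) \<Rightarrow> if e \<in> X then (e, s, i) else (e, i, s))"

definition partial_dual :: "'e set \<Rightarrow> ('e flag \<Rightarrow> 'e flag) \<Rightarrow> ('e flag \<Rightarrow> 'e flag)" where
  "partial_dual X nu = swap_on X \<circ> nu \<circ> swap_on X"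

end

theory Submission
  imports Defs
begin

lemma alpha_inv[simp]: "edge_alpha (edge_alpha f) = f"
  by (cases f) (simp add: edge_alpha_def)
lemma alpha_neq[simp]: "edge_alpha f \<noteq> f"
  by (cases f) (simp add: edge_alpha_def)
lemma alpha_flags[simp]: "edge_alpha f \<in> flags E \<longleftrightarrow> f \<in> flags E"
  by (cases f) (auto simp add: edge_alpha_def flags_def)
lemma beta_flags[simp]: "edge_beta f \<in> flags E \<longleftrightarrow> f \<in> flags E"
  by (cases f) (auto simp add: edge_beta_def flags_def)
lemma alpha_eq[simp]: "edge_alpha (e,i,s) = (e,i,\<not>s)"
  by (simp add: edge_alpha_def)
lemma beta_eq[simp]: "edge_beta (e,i,s) = (e,\<not>i,s)"
  by (simp add: edge_beta_def)
lemma flags_mem[simp]: "(e,i,s) \<in> flags E \<longleftrightarrow> e \<in> E"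
  by (simp add: flags_def)

lemma rg_nu:
  assumes "ribbon_graph E nu" "f \<in> flags E"
  shows "nu f \<in> flags E" "nu (nu f) = f" "nu f \<noteq> f"
  using assms unfolding ribbon_graph_def by auto

lemma rho_in:
  assumes "ribbon_graph E nu" "g \<in> flags E"
  shows "((\<lambda>x. nu (edge_alpha x)) ^^ k) g \<in> flags E"
  using assms(2) by (induction k) (auto intro: rg_nu[OF assms(1)])

lemma rho_inj:
  assumes "ribbon_graph E nu" "a \<in> flags E" "b \<in> flags E"
    and "nu (edge_alpha a) = nu (edge_alpha b)"
  shows "a = b"
proof -
  have "nu (nu (edge_alpha a)) = nu (nu (edge_alpha b))" using assms(4) by simp
  then have "edge_alpha a = edge_alpha b" using rg_nu(2)[OF assms(1)] assms(2,3) by simp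
  then show ?thesis by (metis alpha_inv)
qed

lemma rho_pow_cancel:
  assumes "ribbon_graph E nu"
  shows "a \<in> flags E \<Longrightarrow> b \<in> flags E \<Longrightarrow>
     ((\<lambda>x. nu (edge_alpha x)) ^^ i) a = ((\<lambda>x. nu (edge_alpha x)) ^^ i) b \<Longrightarrow> a = b"
proof (induction i arbitrary: a b)
  case 0
  then show ?case by simp
next
  case (Suc i)
  let ?r = "\<lambda>x. nu (edge_alpha x)"
  have "(?r ^^ i) (?r a) = (?r ^^ i) (?r b)" using Suc.prems(3) by (simp add: funpow_Suc_right del: funpow.simps)
  then have "?r a = ?r b" using Suc.IH Suc.prems rg_nu[OF assms] by auto
  then show ?case using rho_inj[OF assms] Suc.prems by blast
qed

lemma no_twist:
  assumes rg: "ribbon_graph E nu"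
  shows "g \<in> flags E \<Longrightarrow> ((\<lambda>x. nu (edge_alpha x)) ^^ k) g \<noteq> edge_alpha g"
proof (induction k arbitrary: g rule: less_induct)
  case (less k)
  let ?r = "\<lambda>x. nu (edge_alpha x)"
  consider "k = 0" | "k = 1" | m where "k = Suc (Suc m)"
    by (cases k; cases "k - 1") auto
  then show ?case
  proof cases
    case 1 then show ?thesis using alpha_neq[of g] by (metis funpow_0)
  next
    case 2 then show ?thesis using rg_nu(3)[OF rg, of "edge_alpha g"] less.prems by simp
  next
    case 3
    show ?thesis
    proof
      assume H: "(?r ^^ k) g = edge_alpha g"
      define y where "y = (?r ^^ Suc m) g"
      have yF: "y \<in> flags E" unfolding y_def using rho_in[OF rg less.prems] .
      have "nu (edge_alpha y) = edge_alpha g" using H 3 unfolding y_def by simp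
      then have "nu (nu (edge_alpha y)) = nu (edge_alpha g)" by simp
      then have "edge_alpha y = nu (edge_alpha g)" using rg_nu(2)[OF rg] yF by simp
      then have "y = edge_alpha (?r g)" by (metis alpha_inv)
      moreover have "y = (?r ^^ m) (?r g)" unfolding y_def by (simp add: funpow_Suc_right del: funpow.simps)
      moreover have "?r g \<in> flags E" using rg_nu[OF rg] less.prems by simp
      ultimately show False using less.IH[of m "?r g"] 3 by auto
    qed
  qed
qed

lemma rho_period:
  assumes rg: "ribbon_graph E nu" and x: "x \<in> flags E"
  shows "\<exists>p>0. ((\<lambda>x. nu (edge_alpha x)) ^^ p) x = x"
proof -
  let ?r = "\<lambda>x. nu (edge_alpha x)"
  have fin: "finite (flags E)" using rg unfolding ribbon_graph_def flags_def by simp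
  have "\<not> inj_on (\<lambda>k. (?r ^^ k) x) {..card (flags E)}"
  proof
    assume "inj_on (\<lambda>k. (?r ^^ k) x) {..card (flags E)}"
    moreover have "(\<lambda>k. (?r ^^ k) x) ` {..card (flags E)} \<subseteq> flags E"
      using rho_in[OF rg x] by auto
    ultimately have "card {..card (flags E)} \<le> card (flags E)"
      using card_inj_on_le fin by blast
    then show False by simp
  qed
  then obtain i j where ij: "i \<noteq> j" "(?r ^^ i) x = (?r ^^ j) x"
    unfolding inj_on_def by blast
  have "\<exists>i j. i < j \<and> (?r ^^ i) x = (?r ^^ j) x"
    using ij by (metis linorder_neq_iff)
  then obtain i j where ij: "i < j" "(?r ^^ i) x = (?r ^^ j) x" by blast
  have "(?r ^^ (i + (j - i))) x = (?r ^^ i) ((?r ^^ (j - i)) x)"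
    by (simp only: funpow_add comp_apply)
  then have "(?r ^^ i) ((?r ^^ (j - i)) x) = (?r ^^ i) x"
    using ij by simp
  then have "(?r ^^ (j - i)) x = x"
    using rho_pow_cancel[OF rg, of "(?r ^^ (j - i)) x" x i] rho_in[OF rg x] x by blast
  then show ?thesis using ij(1) by (intro exI[of _ "j - i"]) auto
qed

lemma rho_period_mult:
  assumes "((\<lambda>x. nu (edge_alpha x)) ^^ p) x = x"
  shows "((\<lambda>x. nu (edge_alpha x)) ^^ (p * N)) x = x"
proof (induction N)
  case 0 then show ?case by simp
next
  case (Suc N)
  have "p * Suc N = p + p * N" by simp
  then show ?case using Suc assms by (simp only: funpow_add comp_apply)
qed


definition is_col :: "'e set \<Rightarrow> ('e flag \<Rightarrow> 'e flag) \<Rightarrow> ('e flag \<Rightarrow> bool) \<Rightarrow> bool" where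
  "is_col E nu c \<longleftrightarrow> (\<forall>f \<in> flags E. c (nu f) \<noteq> c f \<and> c (edge_alpha f) \<noteq> c f)"

lemma col_exists:
  assumes b: "bouquet E nu"
  shows "\<exists>c. is_col E nu c"
proof (cases "flags E = {}")
  case True then show ?thesis unfolding is_col_def by auto
next
  case False
  then obtain f0 where f0: "f0 \<in> flags E" by blast
  have rg: "ribbon_graph E nu" using b unfolding bouquet_def by simp
  let ?r = "\<lambda>x. nu (edge_alpha x)"
  define c where "c g = (\<exists>k. g = (?r ^^ k) f0)" for g
  obtain p where p: "p > 0" "(?r ^^ p) f0 = f0" using rho_period[OF rg f0] by blast
  have fwd: "c (?r x)" if cx: "c x" for x
  proof -
    obtain k where "x = (?r ^^ k) f0" using cx unfolding c_def by blast
    then have "?r x = (?r ^^ Suc k) f0" by simp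
    then show ?thesis unfolding c_def by blast
  qed
  have bkw: "c x" if cx: "c (?r x)" "x \<in> flags E" for x
  proof -
    obtain k where k: "?r x = (?r ^^ k) f0" using cx unfolding c_def by blast
    show ?thesis
    proof (cases k)
      case 0
      have "?r ((?r ^^ (p - 1)) f0) = (?r ^^ Suc (p - 1)) f0" by simp
      also have "Suc (p - 1) = p" using p by simp
      finally have "?r ((?r ^^ (p - 1)) f0) = ?r x" using p k 0 by simp
      then have "x = (?r ^^ (p - 1)) f0"
        using rho_inj[OF rg] rho_in[OF rg f0] cx(2) by metis
      then show ?thesis unfolding c_def by blast
    next
      case (Suc m)
      then have "?r x = ?r ((?r ^^ m) f0)" using k by simp
      then have "x = (?r ^^ m) f0"
        using rho_inj[OF rg] rho_in[OF rg f0] cx(2) by metis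
      then show ?thesis unfolding c_def by blast
    qed
  qed
  have excl: False if g: "g \<in> flags E" "c g" "c (edge_alpha g)" for g
  proof -
    obtain k where k: "g = (?r ^^ k) f0" using g unfolding c_def by blast
    obtain m where m: "edge_alpha g = (?r ^^ m) f0" using g unfolding c_def by blast
    have pk: "(?r ^^ (p * k)) f0 = f0" using rho_period_mult[OF p(2)] .
    have "k \<le> m + p * k" using p(1) by (metis le_add2 mult_le_mono1 mult_1 Suc_leI One_nat_def le_trans)
    then have eq: "m + p * k = (m + p * k - k) + k" by simp
    have "edge_alpha g = (?r ^^ m) ((?r ^^ (p * k)) f0)" using m pk by simp
    also have "\<dots> = (?r ^^ (m + p * k)) f0" by (simp only: funpow_add comp_apply)
    also have "\<dots> = (?r ^^ ((m + p * k - k) + k)) f0" using eq by (rule arg_cong)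
    also have "\<dots> = (?r ^^ (m + p * k - k)) g" using k by (simp only: funpow_add comp_apply)
    finally show False using no_twist[OF rg g(1)] by metis
  qed
  have cover: "z \<in> flags E \<and> (c z \<or> c (edge_alpha z))" if "(f0, z) \<in> (vertex_step E nu)\<^sup>*" for z
    using that
  proof (induction rule: rtrancl_induct)
    case base
    have "c f0" unfolding c_def by (metis funpow_0)
    then show ?case using f0 by simp
  next
    case (step y z)
    from step.hyps(2) have yF: "y \<in> flags E" and zz: "z = nu y \<or> z = edge_alpha y"
      unfolding vertex_step_def by auto
    show ?case
    proof (cases "z = nu y")
      case True
      have zF: "z \<in> flags E" using True rg_nu[OF rg yF] by simp
      have r1: "?r (edge_alpha z) = y" using True rg_nu[OF rg yF] by simp
      have r2: "z = ?r (edge_alpha y)" using True by simp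
      from step.IH have "c y \<or> c (edge_alpha y)" by blast
      then show ?thesis
      proof
        assume "c y"
        then have "c (?r (edge_alpha z))" using r1 by simp
        then have "c (edge_alpha z)" using bkw[of "edge_alpha z"] zF by simp
        then show ?thesis using zF by blast
      next
        assume "c (edge_alpha y)"
        then have "c z" using fwd[of "edge_alpha y"] r2 by simp
        then show ?thesis using zF by blast
      qed
    next
      case False
      then have "z = edge_alpha y" using zz by simp
      then show ?thesis using step.IH by auto
    qed
  qed
  have "is_col E nu c"
    unfolding is_col_def
  proof
    fix g assume gF: "g \<in> flags E"
    have conn: "(f0, g) \<in> (vertex_step E nu)\<^sup>*" using b f0 gF unfolding bouquet_def by blast
    have a: "c (edge_alpha g) \<noteq> c g" using cover[OF conn] excl[OF gF] by auto
    have "nu g = ?r (edge_alpha g)" by simp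
    moreover have "c (?r (edge_alpha g)) = c (edge_alpha g)" using fwd[of "edge_alpha g"] bkw[of "edge_alpha g"] gF alpha_flags by blast
    ultimately show "c (nu g) \<noteq> c g \<and> c (edge_alpha g) \<noteq> c g" using a by simp
  qed
  then show ?thesis by blast
qed


lemma col_unique:
  assumes b: "bouquet E nu" and c1: "is_col E nu c1" and c2: "is_col E nu c2"
  shows "(\<forall>f \<in> flags E. c1 f = c2 f) \<or> (\<forall>f \<in> flags E. c1 f \<noteq> c2 f)"
proof (cases "flags E = {}")
  case True then show ?thesis by simp
next
  case False
  then obtain f0 where f0: "f0 \<in> flags E" by blast
  have inv: "(c1 z = c2 z) = (c1 f0 = c2 f0)" if "(f0, z) \<in> (vertex_step E nu)\<^sup>*" for z
    using that
  proof (induction rule: rtrancl_induct)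
    case base then show ?case by simp
  next
    case (step y z)
    from step.hyps(2) have yF: "y \<in> flags E" and zz: "z = nu y \<or> z = edge_alpha y"
      unfolding vertex_step_def by auto
    have i1: "c1 (nu y) \<noteq> c1 y" "c1 (edge_alpha y) \<noteq> c1 y"
       "c2 (nu y) \<noteq> c2 y" "c2 (edge_alpha y) \<noteq> c2 y"
      using c1 c2 yF unfolding is_col_def by blast+
    have "c1 z = (\<not> c1 y)" "c2 z = (\<not> c2 y)"
      using zz i1 by blast+
    then show ?case using step.IH by auto
  qed
  have "\<forall>g \<in> flags E. (c1 g = c2 g) = (c1 f0 = c2 f0)"
    using inv b f0 unfolding bouquet_def by blast
  then show ?thesis by auto
qed

lemma OL:
  assumes b: "bouquet E nu" and c: "is_col E nu c" and e: "e \<in> E"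
  shows "orientable_loop E nu e \<longleftrightarrow> c (e, True, False) \<noteq> c (e, False, False)"
proof
  assume "orientable_loop E nu e"
  then obtain c2 :: "'a flag \<Rightarrow> bool" where c2a: "\<forall>f \<in> flags E. c2 (nu f) \<noteq> c2 f \<and> c2 (edge_alpha f) \<noteq> c2 f"
    and c2b: "\<forall>i s. c2 (edge_beta (e, i, s)) \<noteq> c2 (e, i, s)"
    unfolding orientable_loop_def by (elim exE conjE) iprover
  have "is_col E nu c2" using c2a unfolding is_col_def by blast
  from col_unique[OF b c this] have "(\<forall>f \<in> flags E. c f = c2 f) \<or> (\<forall>f \<in> flags E. c f \<noteq> c2 f)" .
  moreover have "c2 (e, True, False) \<noteq> c2 (e, False, False)" using c2b[rule_format, of False False] by simp
  moreover have m: "(e, True, False) \<in> flags E" "(e, False, False) \<in> flags E" using e by simp_all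
  ultimately show "c (e, True, False) \<noteq> c (e, False, False)"
  proof (elim disjE)
    assume "\<forall>f \<in> flags E. c f = c2 f"
    then have "c (e, True, False) = c2 (e, True, False)" "c (e, False, False) = c2 (e, False, False)"
      using m by simp_all
    then show ?thesis using \<open>c2 (e, True, False) \<noteq> c2 (e, False, False)\<close> by simp
  next
    assume "\<forall>f \<in> flags E. c f \<noteq> c2 f"
    then have "c (e, True, False) = (\<not> c2 (e, True, False))" "c (e, False, False) = (\<not> c2 (e, False, False))"
      using m by auto
    then show ?thesis using \<open>c2 (e, True, False) \<noteq> c2 (e, False, False)\<close> by simp
  qed
next
  assume H: "c (e, True, False) \<noteq> c (e, False, False)"
  have a1: "c (e, i, True) = (\<not> c (e, i, False))" for i
  proof -
    have "(e, i, False) \<in> flags E" using e by simp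
    then have "c (edge_alpha (e, i, False)) \<noteq> c (e, i, False)" using c unfolding is_col_def by blast
    then show ?thesis by simp
  qed
  have "\<forall>i s. c (edge_beta (e, i, s)) \<noteq> c (e, i, s)"
  proof (intro allI)
    fix i s show "c (edge_beta (e, i, s)) \<noteq> c (e, i, s)"
      using H a1[of True] a1[of False] by (cases i; cases s) simp_all
  qed
  moreover have "\<forall>f \<in> flags E. c (nu f) \<noteq> c f \<and> c (edge_alpha f) \<noteq> c f"
    using c unfolding is_col_def .
  ultimately show "orientable_loop E nu e"
    unfolding orientable_loop_def by (intro exI[of _ c] conjI)
qed

lemma sw_inv[simp]: "swap_on X (swap_on X f) = f"
  by (cases f) (simp add: swap_on_def)
lemma sw_flags[simp]: "swap_on X f \<in> flags E \<longleftrightarrow> f \<in> flags E"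
  by (cases f) (auto simp add: swap_on_def)
lemma sw_alpha: "swap_on X (edge_alpha f) = (if fst f \<in> X then edge_beta (swap_on X f) else edge_alpha (swap_on X f))"
  by (cases f) (simp add: swap_on_def)
lemma sw_beta: "swap_on X (edge_beta f) = (if fst f \<in> X then edge_alpha (swap_on X f) else edge_beta (swap_on X f))"
  by (cases f) (simp add: swap_on_def)

theorem lemma3p10:
  fixes E :: "'e set" and nu :: "'e flag \<Rightarrow> 'e flag" and X :: "'e set"
  assumes "bouquet E nu"
    and "pseudo_orientable E nu"
    and "X \<subseteq> E"
    and "bouquet E (partial_dual X nu)"
  shows "pseudo_orientable E (partial_dual X nu)"
proof -
  let ?F = "flags E"
  let ?sw = "swap_on X"
  let ?nu' = "partial_dual X nu"
  have b: "bouquet E nu" and b': "bouquet E ?nu'" using assms by auto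
  have rg: "ribbon_graph E nu" using b unfolding bouquet_def by simp
  have fin: "finite ?F" using rg unfolding ribbon_graph_def flags_def by simp
  obtain h where h: "certificate E nu h" using assms(2) unfolding pseudo_orientable_def by blast
  obtain c where c: "is_col E nu c" using col_exists[OF b] by blast
  obtain c' where c': "is_col E ?nu' c'" using col_exists[OF b'] by blast
  have hA: "\<forall>f \<in> ?F. h (edge_alpha f) = h f" using h unfolding certificate_def by blast
  define S where "S = {{f, nu f} | f. f \<in> ?F \<and> h f \<noteq> h (nu f)}"
  have S2: "card S \<le> 2" using h unfolding certificate_def S_def by blast
  have "S \<subseteq> (\<lambda>f. {f, nu f}) ` ?F" unfolding S_def by blast
  then have Sfin: "finite S" using fin finite_subset by blast
  define d where "d f = (c f \<noteq> h f)" for f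
  have dA: "d (edge_alpha f) \<noteq> d f" if "f \<in> ?F" for f
    using c hA that unfolding is_col_def d_def by auto
  have dN: "d (nu f) \<noteq> d f" if "f \<in> ?F" "h f = h (nu f)" for f
    using c that unfolding is_col_def d_def by auto
  have dkey: "d (e, True, False) \<noteq> d (e, False, False)" if e: "e \<in> E" for e
  proof (cases "orientable_loop E nu e")
    case True
    then show ?thesis using OL[OF b c e] h e unfolding certificate_def d_def by auto
  next
    case False
    then show ?thesis using OL[OF b c e] h e unfolding certificate_def d_def by auto
  qed
  have dB: "d (edge_beta f) \<noteq> d f" if "f \<in> ?F" for f
  proof -
    obtain e i s where f: "f = (e, i, s)" by (cases f)
    have e: "e \<in> E" using that f by simp
    have "d (e, i, True) = (\<not> d (e, i, False))" for i
      using dA[of "(e, i, False)"] e by auto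
    then show ?thesis using dkey[OF e] f by (cases i; cases s) auto
  qed
  define d' where "d' f = d (?sw f)" for f
  have d'A: "d' (edge_alpha f) \<noteq> d' f" if "f \<in> ?F" for f
    using dA dB that unfolding d'_def by (simp add: sw_alpha)
  have d'B: "d' (edge_beta f) \<noteq> d' f" if "f \<in> ?F" for f
    using dA dB that unfolding d'_def by (simp add: sw_beta)
  have nu'_eq: "?nu' f = ?sw (nu (?sw f))" for f
    unfolding partial_dual_def by simp
  define h' where "h' f = (c' f \<noteq> d' f)" for f
  have "certificate E ?nu' h'"
    unfolding certificate_def
  proof (intro conjI ballI impI)
    fix f assume "f \<in> ?F"
    then show "h' (edge_alpha f) = h' f"
      using c' d'A unfolding is_col_def h'_def by auto
  next
    let ?S' = "{{f, ?nu' f} | f. f \<in> ?F \<and> h' f \<noteq> h' (?nu' f)}"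
    have "?S' \<subseteq> (\<lambda>A. ?sw ` A) ` S"
    proof
      fix A assume "A \<in> ?S'"
      then obtain f where f: "f \<in> ?F" "h' f \<noteq> h' (?nu' f)" "A = {f, ?nu' f}" by blast
      have "d' f = d' (?nu' f)" using f(1,2) c' unfolding h'_def is_col_def by auto
      then have "d (?sw f) = d (nu (?sw f))" unfolding d'_def nu'_eq by simp
      then have hh: "h (?sw f) \<noteq> h (nu (?sw f))" using dN[of "?sw f"] f(1) by auto
      have sF: "?sw f \<in> ?F" using f(1) by simp
      have "{?sw f, nu (?sw f)} \<in> S" unfolding S_def
        by (rule CollectI, rule exI[of _ "?sw f"]) (use sF hh in \<open>simp del: flags_mem\<close>)
      moreover have "A = ?sw ` {?sw f, nu (?sw f)}" using f(3) nu'_eq by simp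
      ultimately show "A \<in> (\<lambda>A. ?sw ` A) ` S" by blast
    qed
    then have "card ?S' \<le> card ((\<lambda>A. ?sw ` A) ` S)" using Sfin by (intro card_mono) auto
    also have "\<dots> \<le> card S" using card_image_le[OF Sfin] .
    finally show "card ?S' \<le> 2" using S2 by simp
  next
    fix e assume e: "e \<in> E" and o: "orientable_loop E ?nu' e"
    have "c' (e, True, False) \<noteq> c' (e, False, False)" using OL[OF b' c' e] o by simp
    moreover have "d' (e, True, False) \<noteq> d' (e, False, False)" using d'B[of "(e, False, False)"] e by simp
    ultimately show "h' (e, False, False) = h' (e, True, False)" unfolding h'_def by auto
  next
    fix e assume e: "e \<in> E" and o: "\<not> orientable_loop E ?nu' e"
    have "c' (e, True, False) = c' (e, False, False)" using OL[OF b' c' e] o by simp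
    moreover have "d' (e, True, False) \<noteq> d' (e, False, False)" using d'B[of "(e, False, False)"] e by simp
    ultimately show "h' (e, False, False) \<noteq> h' (e, True, False)" unfolding h'_def by auto
  qed
  then show ?thesis unfolding pseudo_orientable_def by blast
qed

end
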